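(* Let $G$ be a group and $H\subseteq G$ a subgroup with weak $n$-paradoxical towers for some $n\in\mathbb N$. Then $G$ has weak $n$-paradoxical towers.
   Context: For $n\in\mathbb N$, a group $G$ has weak $n$-paradoxical towers if for every $m\in\mathbb N$ there exist a finite subset $D\subseteq G$ with $|D|\ge m$, subsets $K_1,\dots,K_n\subseteq G$ and elements $g_1,\dots,g_n\in G$ such that for each $j$ the sets $\{dK_j\}_{d\in D}$ are pairwise disjoint, and $\bigcup_{j=1}^n g_jK_j=G$. *)

theory Defs
  imports "HOL-Algebra.Coset"
begin

definition weak_paradoxical_towers :: "('a, 'b) monoid_scheme \<Rightarrow> nat \<Rightarrow> bool" where
  "weak_paradoxical_towers G n \<longleftrightarrow>
     (\<forall>m::nat. \<exists>(D::'a set) (K::nat \<Rightarrow> 'a set) (g::nat \<Rightarrow> 'a).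
        finite D \<and> D \<subseteq> carrier G \<and> card D \<ge> m \<and>
        (\<forall>j<n. K j \<subseteq> carrier G \<and> g j \<in> carrier G) \<and>
        (\<forall>j<n. \<forall>d\<in>D. \<forall>d'\<in>D. d \<noteq> d' \<longrightarrow>
             (d <#\<^bsub>G\<^esub> K j) \<inter> (d' <#\<^bsub>G\<^esub> K j) = {}) \<and>
        (\<Union>j<n. g j <#\<^bsub>G\<^esub> K j) = carrier G)"

end

theory Submission
  imports Defs
begin

lemma lcoset_sub: "l_coset (G\<lparr>carrier := H\<rparr>) d K = l_coset G d K"
  by (simp add: l_coset_def)

theorem proposition3p12:
  fixes G :: "('a, 'b) monoid_scheme" and H :: "'a set" and n :: nat
  assumes "group G"
    and "subgroup H G"
    and "weak_paradoxical_towers (G\<lparr>carrier := H\<rparr>) n"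
  shows "weak_paradoxical_towers G n"
proof -
  interpret group G by fact
  note sg = assms(2)
  have HG: "H \<subseteq> carrier G" using sg subgroup.subset by blast
  define r where "r x = (SOME t. t \<in> H #>\<^bsub>G\<^esub> x)" for x
  define T where "T = r ` carrier G"
  have rin: "r x \<in> H #>\<^bsub>G\<^esub> x" if "x \<in> carrier G" for x
  proof -
    have "x \<in> H #>\<^bsub>G\<^esub> x" using rcos_self[OF that sg] .
    then show ?thesis unfolding r_def by (rule someI)
  qed
  have Tc: "t \<in> carrier G" if tT: "t \<in> T" for t
  proof -
    obtain x where x: "x \<in> carrier G" "t = r x" using tT unfolding T_def by auto
    have "H #>\<^bsub>G\<^esub> x \<subseteq> carrier G" using r_coset_subset_G[OF HG x(1)] .
    then show ?thesis using rin[OF x(1)] x(2) by auto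
  qed
  have Tcov: "\<exists>h\<in>H. \<exists>t\<in>T. x = h \<otimes>\<^bsub>G\<^esub> t" if x: "x \<in> carrier G" for x
  proof -
    have "r x \<in> H #>\<^bsub>G\<^esub> x" using rin x .
    then obtain h where h: "h \<in> H" "r x = h \<otimes>\<^bsub>G\<^esub> x" unfolding r_coset_def by auto
    have hc: "h \<in> carrier G" using h HG by auto
    have rxc: "r x \<in> carrier G" using rin[OF x] r_coset_subset_G[OF HG x] by blast
    have "x = inv\<^bsub>G\<^esub> h \<otimes>\<^bsub>G\<^esub> r x" by (subst inv_solve_left[OF x hc rxc]) (rule h(2))
    moreover have "inv\<^bsub>G\<^esub> h \<in> H" using subgroup.m_inv_closed[OF sg h(1)] by simp
    moreover have "r x \<in> T" unfolding T_def using x by auto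
    ultimately show ?thesis by blast
  qed
  have Tuniq: "t = t'" if as: "t \<in> T" "t' \<in> T" "h \<in> H" "h' \<in> H" "h \<otimes>\<^bsub>G\<^esub> t = h' \<otimes>\<^bsub>G\<^esub> t'" for h h' t t'
  proof -
    obtain x where x: "x \<in> carrier G" "t = r x" using as(1) unfolding T_def by auto
    obtain x' where x': "x' \<in> carrier G" "t' = r x'" using as(2) unfolding T_def by auto
    have e1: "H #>\<^bsub>G\<^esub> t = H #>\<^bsub>G\<^esub> x" using rin[OF x(1)] x sg
      by (metis repr_independence)
    have e2: "H #>\<^bsub>G\<^esub> t' = H #>\<^bsub>G\<^esub> x'" using rin[OF x'(1)] x' sg
      by (metis repr_independence)
    have hc: "h \<in> carrier G" "h' \<in> carrier G" using as HG by auto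
    have tc: "t \<in> carrier G" "t' \<in> carrier G" using Tc as by auto
    have "t' = (inv\<^bsub>G\<^esub> h' \<otimes>\<^bsub>G\<^esub> h) \<otimes>\<^bsub>G\<^esub> t"
    proof -
      have "t' = inv\<^bsub>G\<^esub> h' \<otimes>\<^bsub>G\<^esub> (h \<otimes>\<^bsub>G\<^esub> t)"
        using as(5) inv_solve_left[of t' h' "h \<otimes>\<^bsub>G\<^esub> t"] hc tc by blast
      then show ?thesis using hc tc by (simp only: m_assoc inv_closed)
    qed
    moreover have "inv\<^bsub>G\<^esub> h' \<otimes>\<^bsub>G\<^esub> h \<in> H" using as sg
      by (meson subgroup.m_closed subgroup.m_inv_closed)
    ultimately have "t' \<in> H #>\<^bsub>G\<^esub> t" unfolding r_coset_def by auto
    then have "H #>\<^bsub>G\<^esub> t' = H #>\<^bsub>G\<^esub> t" using sg tc by (metis repr_independence)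
    then have "H #>\<^bsub>G\<^esub> x = H #>\<^bsub>G\<^esub> x'" using e1 e2 by simp
    then show ?thesis using x x' unfolding r_def by simp
  qed
  show ?thesis unfolding weak_paradoxical_towers_def
  proof
    fix m
    obtain D K g where D: "finite D" "D \<subseteq> H" "card D \<ge> m"
      and Kg: "\<forall>j<n. K j \<subseteq> H \<and> g j \<in> H"
      and disj: "\<forall>j<n. \<forall>d\<in>D. \<forall>d'\<in>D. d \<noteq> d' \<longrightarrow> (d <#\<^bsub>G\<^esub> K j) \<inter> (d' <#\<^bsub>G\<^esub> K j) = {}"
      and cov: "(\<Union>j<n. g j <#\<^bsub>G\<^esub> K j) = H"
      using assms(3)[unfolded weak_paradoxical_towers_def, rule_format, of m]
      by (auto simp: lcoset_sub)
    define K' where "K' j = K j <#>\<^bsub>G\<^esub> T" for j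
    show "\<exists>D K g. finite D \<and> D \<subseteq> carrier G \<and> card D \<ge> m \<and>
        (\<forall>j<n. K j \<subseteq> carrier G \<and> g j \<in> carrier G) \<and>
        (\<forall>j<n. \<forall>d\<in>D. \<forall>d'\<in>D. d \<noteq> d' \<longrightarrow> (d <#\<^bsub>G\<^esub> K j) \<inter> (d' <#\<^bsub>G\<^esub> K j) = {}) \<and>
        (\<Union>j<n. g j <#\<^bsub>G\<^esub> K j) = carrier G"
    proof (intro exI conjI allI impI ballI)
      show "finite D" "card D \<ge> m" using D by auto
      show "D \<subseteq> carrier G" using D HG by auto
      fix j assume j: "j < n"
      show "g j \<in> carrier G" using Kg j HG by auto
      show "K' j \<subseteq> carrier G" unfolding K'_def set_mult_def using Kg j HG Tc by (auto intro!: m_closed)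
    next
      fix j d d' assume j: "j < n" and dd: "d \<in> D" "d' \<in> D" "d \<noteq> d'"
      show "(d <#\<^bsub>G\<^esub> K' j) \<inter> (d' <#\<^bsub>G\<^esub> K' j) = {}"
      proof (rule ccontr)
        assume "(d <#\<^bsub>G\<^esub> K' j) \<inter> (d' <#\<^bsub>G\<^esub> K' j) \<noteq> {}"
        then obtain k t k' t' where kt: "k \<in> K j" "t \<in> T" "k' \<in> K j" "t' \<in> T"
          and eq: "d \<otimes>\<^bsub>G\<^esub> (k \<otimes>\<^bsub>G\<^esub> t) = d' \<otimes>\<^bsub>G\<^esub> (k' \<otimes>\<^bsub>G\<^esub> t')"
          unfolding K'_def set_mult_def l_coset_def by auto
        have kH: "k \<in> H" "k' \<in> H" using Kg j kt by auto
        have dH: "d \<in> H" "d' \<in> H" using D dd by auto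
        have c: "k \<in> carrier G" "k' \<in> carrier G" "d \<in> carrier G" "d' \<in> carrier G"
          "t \<in> carrier G" "t' \<in> carrier G" using kH dH HG Tc kt by auto
        have eq2: "(d \<otimes>\<^bsub>G\<^esub> k) \<otimes>\<^bsub>G\<^esub> t = (d' \<otimes>\<^bsub>G\<^esub> k') \<otimes>\<^bsub>G\<^esub> t'" 
        proof -
          have "(d \<otimes>\<^bsub>G\<^esub> k) \<otimes>\<^bsub>G\<^esub> t = d \<otimes>\<^bsub>G\<^esub> (k \<otimes>\<^bsub>G\<^esub> t)" using c by (rule_tac m_assoc) auto
          also have "... = d' \<otimes>\<^bsub>G\<^esub> (k' \<otimes>\<^bsub>G\<^esub> t')" by (rule eq)
          also have "... = (d' \<otimes>\<^bsub>G\<^esub> k') \<otimes>\<^bsub>G\<^esub> t'" using c by (rule_tac m_assoc[symmetric]) auto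
          finally show ?thesis .
        qed
        have H2: "d \<otimes>\<^bsub>G\<^esub> k \<in> H" "d' \<otimes>\<^bsub>G\<^esub> k' \<in> H" using subgroup.m_closed[OF sg dH(1) kH(1)] subgroup.m_closed[OF sg dH(2) kH(2)] by auto
        have "t = t'" using Tuniq[OF kt(2) kt(4) H2 eq2] .
        then have "d \<otimes>\<^bsub>G\<^esub> k = d' \<otimes>\<^bsub>G\<^esub> k'" using eq2 c by simp
        then have "d \<otimes>\<^bsub>G\<^esub> k \<in> (d <#\<^bsub>G\<^esub> K j) \<inter> (d' <#\<^bsub>G\<^esub> K j)"
          using kt unfolding l_coset_def by (metis (mono_tags, lifting) IntI UN_iff singletonI)
        then show False using disj[rule_format, OF j dd] by simp
      qed
    next
      show "(\<Union>j<n. g j <#\<^bsub>G\<^esub> K' j) = carrier G"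
      proof
        show "(\<Union>j<n. g j <#\<^bsub>G\<^esub> K' j) \<subseteq> carrier G"
        proof
          fix x assume "x \<in> (\<Union>j<n. g j <#\<^bsub>G\<^esub> K' j)"
          then obtain j k t where "j < n" "k \<in> K j" "t \<in> T" "x = g j \<otimes>\<^bsub>G\<^esub> (k \<otimes>\<^bsub>G\<^esub> t)"
            unfolding K'_def set_mult_def l_coset_def by auto
          then show "x \<in> carrier G" using Kg HG Tc by (meson m_closed subsetD)
        qed
      next
        show "carrier G \<subseteq> (\<Union>j<n. g j <#\<^bsub>G\<^esub> K' j)"
        proof
          fix x assume x: "x \<in> carrier G"
          obtain h t where ht: "h \<in> H" "t \<in> T" "x = h \<otimes>\<^bsub>G\<^esub> t" using Tcov[OF x] by blast
          obtain j k where jk: "j < n" "k \<in> K j" "h = g j \<otimes>\<^bsub>G\<^esub> k"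
            using ht(1) cov unfolding l_coset_def by auto
          have c: "g j \<in> carrier G" "k \<in> carrier G" "t \<in> carrier G"
            using jk Kg HG Tc ht by auto
          have "x = g j \<otimes>\<^bsub>G\<^esub> (k \<otimes>\<^bsub>G\<^esub> t)" using ht(3) jk(3) m_assoc[OF c] by simp
          moreover have "k \<otimes>\<^bsub>G\<^esub> t \<in> K' j" unfolding K'_def set_mult_def using jk ht by auto
          ultimately show "x \<in> (\<Union>j<n. g j <#\<^bsub>G\<^esub> K' j)" using jk unfolding l_coset_def by auto
        qed
      qed
    qed
  qed
qed

end
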